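(* Let $t\geq 2$ and let $q\geq 4$ be a prime power. If $M^{(t)}_{2t\times t}(F_q)\neq\emptyset$, then there exists a $q^t$-CMS$(q^t,t)$.
   Context: $M^{(t)}_{k\times s}(F_q)$ denotes the set of $k\times s$ matrices over the finite field $F_q$ in which any $t$ rows are linearly independent. An MS$(n,t)$ is an $n\times n$ matrix with entries $0,\dots,n^2-1$ such that for each $e=1,\dots,t$ the entrywise $e$-th power has all row sums, column sums, main-diagonal sum and back-diagonal sum (entries $(i,n-1-i)$) equal. With $S_e(n)=\frac1n\sum_{k=0}^{n^2-1}k^e$, a family $\{B_0,\dots,B_{m-1}\}$ of MS$(n,t)$s, $B_s=(b^{(s)}_{i,j})$, $i,j\in\{0,\dots,n-1\}$, is an $m$-CMS$(n,t)$ if $\sum_{s}\sum_{j}(b^{(s)}_{i,j})^{t+1}=mS_{t+1}(n)$ for every $i$, $\sum_{s}\sum_{i}(b^{(s)}_{i,j})^{t+1}=mS_{t+1}(n)$ for every $j$, and $\sum_s\sum_i(b^{(s)}_{i,i})^{t+1}=\sum_s\sum_i(b^{(s)}_{i,n-1-i})^{t+1}=mS_{t+1}(n)$. *)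

theory Defs
  imports Complex_Main
begin

text \<open>A k x s matrix over a field is modelled as a function nat => nat => 'a,
  only the entries with row index < k and column index < s being relevant.\<close>

definition rows_lin_indep :: "nat \<Rightarrow> (nat \<Rightarrow> nat \<Rightarrow> 'a::field) \<Rightarrow> nat set \<Rightarrow> bool" where
  "rows_lin_indep s A R \<longleftrightarrow>
     (\<forall>c :: nat \<Rightarrow> 'a. (\<forall>j<s. (\<Sum>i\<in>R. c i * A i j) = 0) \<longrightarrow> (\<forall>i\<in>R. c i = 0))"

text \<open>The set M^{(t)}_{k x s}(F): k x s matrices in which any t rows are linearly independent.
  Entries outside the index range are normalised to 0 so that each matrix has one representative.\<close>
definition M_t :: "nat \<Rightarrow> nat \<Rightarrow> nat \<Rightarrow> (nat \<Rightarrow> nat \<Rightarrow> 'a::field) set" where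
  "M_t t k s = {A. (\<forall>i j. (i \<ge> k \<or> j \<ge> s) \<longrightarrow> A i j = 0) \<and>
                   (\<forall>R. R \<subseteq> {..<k} \<and> card R = t \<longrightarrow> rows_lin_indep s A R)}"

definition is_MS :: "nat \<Rightarrow> nat \<Rightarrow> (nat \<Rightarrow> nat \<Rightarrow> nat) \<Rightarrow> bool" where
  "is_MS n t B \<longleftrightarrow>
     bij_betw (\<lambda>(i, j). B i j) ({..<n} \<times> {..<n}) {..<n^2} \<and>
     (\<forall>e\<in>{1..t}. \<exists>c::nat.
        (\<forall>i<n. (\<Sum>j<n. B i j ^ e) = c) \<and>
        (\<forall>j<n. (\<Sum>i<n. B i j ^ e) = c) \<and>
        (\<Sum>i<n. B i i ^ e) = c \<and>
        (\<Sum>i<n. B i (n - 1 - i) ^ e) = c)"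

definition S_pow :: "nat \<Rightarrow> nat \<Rightarrow> real" where
  "S_pow e n = (1 / real n) * (\<Sum>k<n^2. real k ^ e)"

definition is_CMS :: "nat \<Rightarrow> nat \<Rightarrow> nat \<Rightarrow> (nat \<Rightarrow> nat \<Rightarrow> nat \<Rightarrow> nat) \<Rightarrow> bool" where
  "is_CMS m n t B \<longleftrightarrow>
     inj_on B {..<m} \<and>
     (\<forall>s<m. is_MS n t (B s)) \<and>
     (\<forall>i<n. (\<Sum>s<m. \<Sum>j<n. real (B s i j) ^ (t+1)) = real m * S_pow (t+1) n) \<and>
     (\<forall>j<n. (\<Sum>s<m. \<Sum>i<n. real (B s i j) ^ (t+1)) = real m * S_pow (t+1) n) \<and>
     (\<Sum>s<m. \<Sum>i<n. real (B s i i) ^ (t+1)) = real m * S_pow (t+1) n \<and>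
     (\<Sum>s<m. \<Sum>i<n. real (B s i (n - 1 - i)) ^ (t+1)) = real m * S_pow (t+1) n"

end

theory Submission
  imports Defs "HOL-Library.FuncSet"
begin


definition W :: "nat set \<Rightarrow> (nat \<Rightarrow> 'a::zero) set" where
  "W K = {w. \<forall>k. k \<notin> K \<longrightarrow> w k = 0}"

definition restr :: "nat set \<Rightarrow> (nat \<Rightarrow> 'a::zero) \<Rightarrow> nat \<Rightarrow> 'a" where
  "restr K d = (\<lambda>k. if k \<in> K then d k else 0)"

definition lineF :: "nat \<Rightarrow> (nat \<Rightarrow> nat \<Rightarrow> 'a::field) \<Rightarrow> (nat \<Rightarrow> 'a) \<Rightarrow> (nat \<Rightarrow> 'a) \<Rightarrow> (nat \<Rightarrow> 'a) \<Rightarrow> nat \<Rightarrow> 'a" where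
  "lineF t A r c z = (\<lambda>k. if k < 2*t then (\<Sum>j<t. r k * A k j * z j) + c k else 0)"

lemma inj_card_bij:
  assumes "finite B" "inj_on f A" "f ` A \<subseteq> B" "card A = card B"
  shows "bij_betw f A B"
proof -
  have "card (f ` A) = card B" using assms(2,4) card_image by metis
  then have "f ` A = B" using assms(1,3) card_subset_eq by blast
  then show ?thesis using assms(2) unfolding bij_betw_def by blast
qed

lemma W_bij_PiE:
  "bij_betw (\<lambda>w. restrict w K) (W K :: (nat \<Rightarrow> 'a::zero) set) (PiE K (\<lambda>_. UNIV))"
proof -
  have "inj_on (\<lambda>w. restrict w K) (W K :: (nat \<Rightarrow> 'a) set)"
  proof (rule inj_onI)
    fix x y :: "nat \<Rightarrow> 'a" assume "x \<in> W K" "y \<in> W K" "restrict x K = restrict y K"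
    then show "x = y"
    proof -
      assume a: "x \<in> W K" "y \<in> W K" "restrict x K = restrict y K"
      show "x = y"
      proof (rule ext)
        fix k show "x k = y k"
        proof -
          have "restrict x K k = restrict y K k" using a(3) by simp
          then show ?thesis using a(1,2) by (cases "k \<in> K") (auto simp: W_def)
        qed
      qed
    qed
  qed
  moreover have "(\<lambda>w. restrict w K) ` (W K :: (nat \<Rightarrow> 'a) set) = PiE K (\<lambda>_. UNIV)"
  proof
    show "(\<lambda>w. restrict w K) ` W K \<subseteq> PiE K (\<lambda>_. UNIV)" by auto
    show "PiE K (\<lambda>_. UNIV) \<subseteq> (\<lambda>w. restrict w K) ` (W K :: (nat \<Rightarrow> 'a) set)"
    proof
      fix f assume f: "f \<in> PiE K (\<lambda>_. (UNIV :: 'a set))"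
      have "restr K f \<in> W K" unfolding restr_def W_def by auto
      moreover have "restrict (restr K f) K = f"
        using f unfolding restr_def restrict_def PiE_def extensional_def by auto
      ultimately show "f \<in> (\<lambda>w. restrict w K) ` W K" by (metis image_eqI)
    qed
  qed
  ultimately show ?thesis unfolding bij_betw_def by blast
qed

lemma finite_W: "finite K \<Longrightarrow> finite (W K :: (nat \<Rightarrow> 'a::{zero,finite}) set)"
proof -
  assume "finite K"
  then have "finite (PiE K (\<lambda>_. UNIV :: 'a set))" by (simp add: finite_PiE)
  then show ?thesis using W_bij_PiE[of K, where 'a='a] bij_betw_finite by blast
qed

lemma card_W: "finite K \<Longrightarrow> card (W K :: (nat \<Rightarrow> 'a::{zero,finite}) set) = card (UNIV::'a set) ^ card K"
proof -
  assume "finite K"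
  then have "card (PiE K (\<lambda>_. UNIV :: 'a set)) = card (UNIV::'a set) ^ card K" by (simp add: card_PiE)
  then show ?thesis using W_bij_PiE[of K, where 'a='a] bij_betw_same_card by metis
qed

lemma restr_W: "restr K d \<in> W K"
  unfolding restr_def W_def by auto

lemma lin_bij:
  fixes A :: "nat \<Rightarrow> nat \<Rightarrow> 'a::{finite,field}"
  assumes A: "A \<in> M_t t (2*t) t" and K: "K \<subseteq> {..<2*t}" "card K = t"
    and r: "\<forall>k\<in>K. r k \<noteq> 0"
  shows "bij_betw (\<lambda>z. restr K (lineF t A r c z)) (W {..<t}) (W K)"
proof -
  have fK: "finite K" using K finite_subset by blast
  have li: "rows_lin_indep t A K" using A K unfolding M_t_def by auto
  define \<phi> where "\<phi> = (\<lambda>c::nat\<Rightarrow>'a. (\<lambda>j. if j<t then (\<Sum>i\<in>K. c i * A i j) else 0))"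
  have "inj_on \<phi> (W K)"
  proof (rule inj_onI)
    fix a b assume a: "a \<in> W K" and b: "b \<in> W K" and e: "\<phi> a = \<phi> b"
    have "\<forall>j<t. (\<Sum>i\<in>K. (a i - b i) * A i j) = 0"
    proof (intro allI impI)
      fix j assume "j < t"
      then have "(\<Sum>i\<in>K. a i * A i j) = (\<Sum>i\<in>K. b i * A i j)"
        using fun_cong[OF e, of j] unfolding \<phi>_def by simp
      then show "(\<Sum>i\<in>K. (a i - b i) * A i j) = 0"
        by (simp add: left_diff_distrib sum_subtractf)
    qed
    moreover have "(\<forall>j<t. (\<Sum>i\<in>K. (\<lambda>i. a i - b i) i * A i j) = 0) \<longrightarrow> (\<forall>i\<in>K. (\<lambda>i. a i - b i) i = 0)"
      using li unfolding rows_lin_indep_def by (rule spec)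
    ultimately have "\<forall>i\<in>K. a i - b i = 0" by simp
    show "a = b"
    proof (rule ext)
      fix k show "a k = b k"
        using \<open>\<forall>i\<in>K. a i - b i = 0\<close> a b by (cases "k \<in> K") (auto simp: W_def)
    qed
  qed
  moreover have "\<phi> ` W K \<subseteq> W {..<t}" unfolding \<phi>_def W_def by auto
  moreover have "card (W K :: (nat\<Rightarrow>'a) set) = card (W {..<t} :: (nat\<Rightarrow>'a) set)"
    using card_W[OF fK, where 'a='a] card_W[of "{..<t}", where 'a='a] K(2) by simp
  ultimately have bphi: "bij_betw \<phi> (W K) (W {..<t})"
    using inj_card_bij[OF finite_W[of "{..<t}"]] by simp
  have unit: "\<exists>cc\<in>W K. \<forall>j<t. (\<Sum>i\<in>K. cc i * A i j) = (if j = j0 then 1 else 0)" if "j0 < t" for j0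
  proof -
    have "(\<lambda>j. if j = j0 then (1::'a) else 0) \<in> W {..<t}" using that unfolding W_def by auto
    then have "(\<lambda>j. if j = j0 then (1::'a) else 0) \<in> \<phi> ` W K"
      using bphi unfolding bij_betw_def by simp
    then obtain cc where cc: "cc \<in> W K" "\<phi> cc = (\<lambda>j. if j = j0 then 1 else 0)"
      by (rule imageE) simp
    have "\<forall>j<t. (\<Sum>i\<in>K. cc i * A i j) = (if j = j0 then 1 else 0)"
    proof (intro allI impI)
      fix j assume "j < t" then show "(\<Sum>i\<in>K. cc i * A i j) = (if j = j0 then 1 else 0)"
        using fun_cong[OF cc(2), of j] unfolding \<phi>_def by simp
    qed
    then show ?thesis using cc(1) by blast
  qed
  have "inj_on (\<lambda>z. restr K (lineF t A r c z)) (W {..<t})"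
  proof (rule inj_onI)
    fix z z' :: "nat \<Rightarrow> 'a"
    assume z: "z \<in> W {..<t}" and z': "z' \<in> W {..<t}"
      and e: "restr K (lineF t A r c z) = restr K (lineF t A r c z')"
    have rows: "(\<Sum>j<t. A k j * z j) = (\<Sum>j<t. A k j * z' j)" if k: "k \<in> K" for k
    proof -
      have "k < 2*t" using k K by auto
      then have "(\<Sum>j<t. r k * A k j * z j) = (\<Sum>j<t. r k * A k j * z' j)"
        using fun_cong[OF e, of k] k unfolding restr_def lineF_def by simp
      then have "r k * (\<Sum>j<t. A k j * z j) = r k * (\<Sum>j<t. A k j * z' j)"
        by (simp add: sum_distrib_left mult.assoc)
      then show ?thesis using r k by simp
    qed
    have "z j0 = z' j0" for j0
    proof (cases "j0 < t")
      case True
      obtain cc where cc: "\<forall>j<t. (\<Sum>i\<in>K. cc i * A i j) = (if j = j0 then 1 else 0)"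
        using unit[OF True] by blast
      have gen: "y j0 = (\<Sum>i\<in>K. cc i * (\<Sum>j<t. A i j * y j))" for y :: "nat \<Rightarrow> 'a"
      proof -
        have "(\<Sum>i\<in>K. cc i * (\<Sum>j<t. A i j * y j)) = (\<Sum>j<t. (\<Sum>i\<in>K. cc i * A i j) * y j)"
          by (simp add: sum_distrib_left sum_distrib_right mult.assoc sum.swap[of _ K])
        also have "\<dots> = (\<Sum>j<t. (if j = j0 then 1 else 0) * y j)"
          using cc by (intro sum.cong) auto
        also have "\<dots> = (\<Sum>j<t. if j = j0 then y j else 0)" by (intro sum.cong) auto
        also have "\<dots> = y j0" using True by simp
        finally show ?thesis by simp
      qed
      have "(\<Sum>i\<in>K. cc i * (\<Sum>j<t. A i j * z j)) = (\<Sum>i\<in>K. cc i * (\<Sum>j<t. A i j * z' j))"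
        using rows by (intro sum.cong) auto
      then show ?thesis using gen[of z] gen[of z'] by simp
    next
      case False
      then show ?thesis using z z' unfolding W_def by auto
    qed
    then show "z = z'" by blast
  qed
  moreover have "(\<lambda>z. restr K (lineF t A r c z)) ` W {..<t} \<subseteq> W K" using restr_W by blast
  moreover have "card (W {..<t} :: (nat\<Rightarrow>'a) set) = card (W K :: (nat\<Rightarrow>'a) set)"
    using card_W[OF fK, where 'a='a] card_W[of "{..<t}", where 'a='a] K(2) by simp
  ultimately show ?thesis using inj_card_bij[OF finite_W[OF fK]] by blast
qed



definition digval :: "nat \<Rightarrow> ('a \<Rightarrow> nat) \<Rightarrow> nat \<Rightarrow> (nat \<Rightarrow> 'a) \<Rightarrow> nat" where
  "digval m \<sigma> q d = (\<Sum>k<m. \<sigma> (d k) * q ^ k)"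

definition addS :: "nat \<Rightarrow> (nat \<Rightarrow> 'a::plus) \<Rightarrow> (nat \<Rightarrow> 'a) \<Rightarrow> nat \<Rightarrow> 'a" where
  "addS t s d = (\<lambda>k. if k < t then d k + s k else d k)"

lemma ext_K:
  assumes "K \<subseteq> {..<2*t}" "card K \<le> t"
  shows "\<exists>K'. K \<subseteq> K' \<and> K' \<subseteq> {..<2*t} \<and> card K' = t"
proof -
  have fK: "finite K" using assms(1) finite_subset by blast
  have "card ({..<2*t} - K) = 2*t - card K" using assms(1) fK by (simp add: card_Diff_subset)
  then have "t - card K \<le> card ({..<2*t} - K)" by simp
  then obtain T where T: "T \<subseteq> {..<2*t} - K" "card T = t - card K" "finite T"
    by (rule obtain_subset_with_card_n)
  have "card (K \<union> T) = card K + card T" using T fK by (intro card_Un_disjoint) auto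
  then have "card (K \<union> T) = t" using T assms(2) by simp
  then show ?thesis using T assms(1) by (intro exI[of _ "K \<union> T"]) auto
qed

lemma line_sum_K':
  fixes A :: "nat \<Rightarrow> nat \<Rightarrow> 'a::{finite,field}" and h :: "(nat \<Rightarrow> 'a) \<Rightarrow> real"
  assumes A: "A \<in> M_t t (2*t) t" and K': "K \<subseteq> K'" "K' \<subseteq> {..<2*t}" "card K' = t"
    and hK: "\<And>d. h d = h (restr K d)" and r: "\<forall>k<2*t. r k \<noteq> 0"
  shows "(\<Sum>z\<in>W {..<t}. h (lineF t A r c z)) = (\<Sum>w\<in>W K'. h w)"
proof -
  have hK': "h d = h (restr K' d)" for d
  proof -
    have "restr K (restr K' d) = restr K d" using K'(1) unfolding restr_def by (intro ext) auto
    then show ?thesis using hK[of d] hK[of "restr K' d"] by simp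
  qed
  have b: "bij_betw (\<lambda>z. restr K' (lineF t A r c z)) (W {..<t}) (W K')"
    using lin_bij[OF A K'(2,3)] r K'(2) by blast
  have "(\<Sum>z\<in>W {..<t}. h (lineF t A r c z)) = (\<Sum>z\<in>W {..<t}. h (restr K' (lineF t A r c z)))"
    using hK' by simp
  also have "\<dots> = (\<Sum>w\<in>W K'. h w)" using sum.reindex_bij_betw[OF b] .
  finally show ?thesis .
qed

lemma line_sum_indep:
  fixes A :: "nat \<Rightarrow> nat \<Rightarrow> 'a::{finite,field}" and h :: "(nat \<Rightarrow> 'a) \<Rightarrow> real"
  assumes A: "A \<in> M_t t (2*t) t" and K: "K \<subseteq> {..<2*t}" "card K \<le> t"
    and hK: "\<And>d. h d = h (restr K d)" and r: "\<forall>k<2*t. r k \<noteq> 0" and r': "\<forall>k<2*t. r' k \<noteq> 0"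
  shows "(\<Sum>z\<in>W {..<t}. h (lineF t A r c z)) = (\<Sum>z\<in>W {..<t}. h (lineF t A r' c' z))"
proof -
  obtain K' where K': "K \<subseteq> K'" "K' \<subseteq> {..<2*t}" "card K' = t" using ext_K[OF K] by blast
  show ?thesis using line_sum_K'[where h=h and c=c, OF A K' hK r] line_sum_K'[where h=h and c=c', OF A K' hK r'] by simp
qed

lemma power_expand:
  "real (digval m \<sigma> q d) ^ e =
    (\<Sum>ks\<in>PiE {..<e} (\<lambda>_. {..<m}). \<Prod>i<e. real (\<sigma> (d (ks i))) * real q ^ (ks i))"
proof -
  have "real (digval m \<sigma> q d) ^ e = (\<Prod>i<e. \<Sum>k<m. real (\<sigma> (d k)) * real q ^ k)"
    unfolding digval_def by simp
  also have "\<dots> = (\<Sum>ks\<in>PiE {..<e} (\<lambda>_. {..<m}). \<Prod>i<e. real (\<sigma> (d (ks i))) * real q ^ (ks i))"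
    by (rule prod_sum_PiE) auto
  finally show ?thesis .
qed

lemma power_line_indep:
  fixes A :: "nat \<Rightarrow> nat \<Rightarrow> 'a::{finite,field}"
  assumes A: "A \<in> M_t t (2*t) t" and e: "e \<le> t"
    and r: "\<forall>k<2*t. r k \<noteq> 0" and r': "\<forall>k<2*t. r' k \<noteq> 0"
  shows "(\<Sum>z\<in>W {..<t}. real (digval (2*t) \<sigma> q (lineF t A r c z)) ^ e)
       = (\<Sum>z\<in>W {..<t}. real (digval (2*t) \<sigma> q (lineF t A r' c' z)) ^ e)"
proof -
  define P where "P = PiE {..<e} (\<lambda>_. {..<2*t})"
  define H where "H = (\<lambda>ks d. \<Prod>i<e. real (\<sigma> (d (ks i))) * real q ^ (ks i))"
  have eq: "(\<Sum>z\<in>W {..<t}. H ks (lineF t A r c z)) = (\<Sum>z\<in>W {..<t}. H ks (lineF t A r' c' z))"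
    if ks: "ks \<in> P" for ks
  proof (rule line_sum_indep[OF A _ _ _ r r'])
    show "ks ` {..<e} \<subseteq> {..<2*t}" using ks unfolding P_def by auto
    show "card (ks ` {..<e}) \<le> t" using card_image_le[of "{..<e}" ks] e by simp
    fix d
    show "H ks d = H ks (restr (ks ` {..<e}) d)" unfolding H_def restr_def by simp
  qed
  have "(\<Sum>z\<in>W {..<t}. real (digval (2*t) \<sigma> q (lineF t A r c z)) ^ e)
      = (\<Sum>z\<in>W {..<t}. \<Sum>ks\<in>P. H ks (lineF t A r c z))"
    unfolding power_expand P_def H_def ..
  also have "\<dots> = (\<Sum>ks\<in>P. \<Sum>z\<in>W {..<t}. H ks (lineF t A r c z))" by (rule sum.swap)
  also have "\<dots> = (\<Sum>ks\<in>P. \<Sum>z\<in>W {..<t}. H ks (lineF t A r' c' z))"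
    using eq by (rule sum.cong[OF refl])
  also have "\<dots> = (\<Sum>z\<in>W {..<t}. \<Sum>ks\<in>P. H ks (lineF t A r' c' z))" by (rule sum.swap)
  also have "\<dots> = (\<Sum>z\<in>W {..<t}. real (digval (2*t) \<sigma> q (lineF t A r' c' z)) ^ e)"
    unfolding power_expand P_def H_def ..
  finally show ?thesis .
qed

lemma digits_sum: "(\<Sum>k<m. (n div q ^ k mod q) * q ^ k) = n mod q ^ m" for n q :: nat
proof (induction m)
  case 0 then show ?case by simp
next
  case (Suc m)
  have "n mod q ^ Suc m = n mod (q ^ m * q)" by (simp add: mult.commute)
  also have "\<dots> = q ^ m * (n div q ^ m mod q) + n mod q ^ m" by (rule mod_mult2_eq)
  finally show ?case using Suc by simp
qed

lemma digval_bound: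
  assumes "\<forall>a. \<sigma> a < q"
  shows "digval m \<sigma> q d < q ^ m"
proof (induction m)
  case 0 then show ?case by (simp add: digval_def)
next
  case (Suc m)
  have "digval (Suc m) \<sigma> q d = digval m \<sigma> q d + \<sigma> (d m) * q ^ m" by (simp add: digval_def)
  also have "\<dots> < q ^ m + \<sigma> (d m) * q ^ m" using Suc by simp
  also have "\<dots> = (1 + \<sigma> (d m)) * q ^ m" by simp
  also have "\<dots> \<le> q * q ^ m" using assms[rule_format, of "d m"] by (intro mult_right_mono) auto
  finally show ?case by simp
qed

lemma digval_bij:
  fixes \<sigma> :: "'a::{finite,zero} \<Rightarrow> nat"
  assumes \<sigma>: "bij_betw \<sigma> UNIV {..<card (UNIV::'a set)}"
  shows "bij_betw (digval m \<sigma> (card (UNIV::'a set))) (W {..<m}) {..<card (UNIV::'a set) ^ m}"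
proof -
  let ?q = "card (UNIV::'a set)"
  have lt: "\<forall>a. \<sigma> a < ?q" using \<sigma> unfolding bij_betw_def by auto
  have sub: "digval m \<sigma> ?q ` W {..<m} \<subseteq> {..<?q ^ m}" using digval_bound[OF lt] by auto
  have sup: "{..<?q ^ m} \<subseteq> digval m \<sigma> ?q ` W {..<m}"
  proof
    fix n assume n: "n \<in> {..<?q ^ m}"
    define d where "d = (\<lambda>k. if k < m then inv_into UNIV \<sigma> (n div ?q ^ k mod ?q) else 0)"
    have "d \<in> W {..<m}" unfolding d_def W_def by auto
    moreover have "digval m \<sigma> ?q d = n"
    proof -
      have "\<sigma> (d k) = n div ?q ^ k mod ?q" if "k < m" for k
      proof -
        have "?q > 0" by (simp add: finite_UNIV_card_ge_0)
        then have "n div ?q ^ k mod ?q \<in> \<sigma> ` UNIV" using \<sigma> unfolding bij_betw_def by auto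
        then show ?thesis unfolding d_def using that by (simp add: f_inv_into_f)
      qed
      then have "digval m \<sigma> ?q d = (\<Sum>k<m. (n div ?q ^ k mod ?q) * ?q ^ k)"
        unfolding digval_def by (intro sum.cong) auto
      also have "\<dots> = n mod ?q ^ m" by (rule digits_sum)
      also have "\<dots> = n" using n by simp
      finally show ?thesis .
    qed
    ultimately show "n \<in> digval m \<sigma> ?q ` W {..<m}" by (metis image_eqI)
  qed
  have img: "digval m \<sigma> ?q ` W {..<m} = {..<?q ^ m}" using sub sup by blast
  have cW: "card (W {..<m} :: (nat \<Rightarrow> 'a) set) = ?q ^ m" using card_W[of "{..<m}", where 'a='a] by simp
  have "inj_on (digval m \<sigma> ?q) (W {..<m})"
    by (rule eq_card_imp_inj_on) (use finite_W[of "{..<m}", where 'a='a] img cW in auto)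
  then show ?thesis using img unfolding bij_betw_def by blast
qed

lemma cms_bij:
  fixes A :: "nat \<Rightarrow> nat \<Rightarrow> 'a::{finite,field}"
  assumes A: "A \<in> M_t t (2*t) t" and r: "\<forall>k<2*t. r k \<noteq> 0"
  shows "bij_betw (\<lambda>(s,z). addS t s (lineF t A r c z)) (W {..<t} \<times> W {..<t}) (W {..<2*t})"
proof -
  let ?K = "{t..<2*t}"
  have bl: "bij_betw (\<lambda>z. restr ?K (lineF t A r c z)) (W {..<t}) (W ?K)"
  proof (rule lin_bij[OF A])
    show "?K \<subseteq> {..<2*t}" by auto
    show "card ?K = t" by simp
    show "\<forall>k\<in>?K. r k \<noteq> 0" using r by auto
  qed
  have inj: "inj_on (\<lambda>(s,z). addS t s (lineF t A r c z)) (W {..<t} \<times> W {..<t})"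
  proof (rule inj_onI, clarify)
    fix s z s' z' :: "nat \<Rightarrow> 'a"
    assume s: "s \<in> W {..<t}" and z: "z \<in> W {..<t}" and s': "s' \<in> W {..<t}" and z': "z' \<in> W {..<t}"
      and e: "addS t s (lineF t A r c z) = addS t s' (lineF t A r c z')"
    have "restr ?K (lineF t A r c z) = restr ?K (lineF t A r c z')"
    proof
      fix k show "restr ?K (lineF t A r c z) k = restr ?K (lineF t A r c z') k"
        using fun_cong[OF e, of k] unfolding restr_def addS_def by auto
    qed
    then have zz: "z = z'" using bl z z' unfolding bij_betw_def inj_on_def by blast
    have "s k = s' k" for k
    proof (cases "k < t")
      case True then show ?thesis using fun_cong[OF e, of k] zz unfolding addS_def by simp
    next
      case False then show ?thesis using s s' unfolding W_def by auto
    qed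
    then show "s = s' \<and> z = z'" using zz by auto
  qed
  have sub: "(\<lambda>(s,z). addS t s (lineF t A r c z)) ` (W {..<t} \<times> W {..<t}) \<subseteq> W {..<2*t}"
    unfolding W_def addS_def lineF_def by auto
  have "card (W {..<t} \<times> W {..<t} :: ((nat\<Rightarrow>'a) \<times> (nat\<Rightarrow>'a)) set) = card (W {..<2*t} :: (nat\<Rightarrow>'a) set)"
    by (simp add: card_cartesian_product card_W power_add[symmetric] mult_2)
  then show ?thesis using inj_card_bij[OF finite_W inj sub] by simp
qed



lemma invol_bij:
  assumes "finite A" "\<forall>a\<in>A. f a \<in> A \<and> f (f a) = a" "\<forall>a\<in>A. \<forall>b\<in>A. f a = a \<longrightarrow> f b = b \<longrightarrow> a = b"
  shows "\<exists>\<iota>. bij_betw \<iota> A {..<card A} \<and> (\<forall>a\<in>A. \<iota> (f a) = card A - 1 - \<iota> a)"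
  using assms
proof (induction "card A" arbitrary: A rule: less_induct)
  case less
  show ?case
  proof (cases "\<exists>a\<in>A. f a \<noteq> a")
    case True
    then obtain a where a: "a \<in> A" "f a \<noteq> a" by blast
    define b where "b = f a"
    have b: "b \<in> A" "f b = a" "b \<noteq> a" using a less.prems(2) unfolding b_def by auto
    define A' where "A' = A - {a, b}"
    define N where "N = card A"
    have cA': "card A' = N - 2" unfolding A'_def N_def using a b less.prems(1) by (simp add: card_Diff_subset)
    have N2: "N \<ge> 2"
    proof -
      have "{a,b} \<subseteq> A" using a b by auto
      then have "card {a,b} \<le> N" unfolding N_def using card_mono[OF less.prems(1)] by blast
      then show ?thesis using b by simp
    qed
    have fA': "\<forall>x\<in>A'. f x \<in> A' \<and> f (f x) = x"
    proof
      fix x assume x: "x \<in> A'"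
      then have xA: "x \<in> A" "x \<noteq> a" "x \<noteq> b" unfolding A'_def by auto
      have "f x \<noteq> a" using xA less.prems(2) b unfolding b_def by metis
      moreover have "f x \<noteq> b" using xA less.prems(2) b by metis
      ultimately show "f x \<in> A' \<and> f (f x) = x" using xA less.prems(2) unfolding A'_def by auto
    qed
    have "card A' < card A" using cA' N2 unfolding N_def by simp
    moreover have "finite A'" unfolding A'_def using less.prems(1) by simp
    moreover have "\<forall>x\<in>A'. \<forall>y\<in>A'. f x = x \<longrightarrow> f y = y \<longrightarrow> x = y"
      using less.prems(3) unfolding A'_def by auto
    ultimately obtain \<iota>' where \<iota>': "bij_betw \<iota>' A' {..<card A'}" "\<forall>x\<in>A'. \<iota>' (f x) = card A' - 1 - \<iota>' x"
      using less.hyps fA' by blast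
    define \<iota> where "\<iota> = (\<lambda>x. if x = a then 0 else if x = b then N - 1 else \<iota>' x + 1)"
    have lt: "\<iota>' x < N - 2" if "x \<in> A'" for x using \<iota>'(1) that cA' unfolding bij_betw_def by auto
    have inj: "inj_on \<iota> A"
    proof (rule inj_onI)
      fix x y assume x: "x \<in> A" and y: "y \<in> A" and e: "\<iota> x = \<iota> y"
      show "x = y"
      proof (cases "x = a \<or> x = b \<or> y = a \<or> y = b")
        case True
        then show ?thesis using e N2 lt[of x] lt[of y] x y b unfolding \<iota>_def A'_def
          by (auto split: if_splits)
      next
        case False
        then have "x \<in> A'" "y \<in> A'" "\<iota>' x = \<iota>' y" using x y e unfolding A'_def \<iota>_def by auto
        then show ?thesis using \<iota>'(1) unfolding bij_betw_def inj_on_def by blast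
      qed
    qed
    have sub: "\<iota> ` A \<subseteq> {..<N}"
    proof
      fix v assume "v \<in> \<iota> ` A"
      then obtain x where x: "x \<in> A" "v = \<iota> x" by blast
      show "v \<in> {..<N}"
      proof (cases "x = a \<or> x = b")
        case True then show ?thesis using x N2 unfolding \<iota>_def by auto
      next
        case False then have "x \<in> A'" using x unfolding A'_def by auto
        then show ?thesis using lt[of x] x False unfolding \<iota>_def by auto
      qed
    qed
    have bij: "bij_betw \<iota> A {..<N}" using inj_card_bij[OF _ inj sub] unfolding N_def by simp
    have eqv: "\<iota> (f x) = N - 1 - \<iota> x" if x: "x \<in> A" for x
    proof (cases "x = a \<or> x = b")
      case True then show ?thesis using b N2 unfolding \<iota>_def b_def by auto
    next
      case False
      then have xA': "x \<in> A'" using x unfolding A'_def by auto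
      then have fx: "f x \<in> A'" "f x \<noteq> a" "f x \<noteq> b" using fA' unfolding A'_def by auto
      have "\<iota> (f x) = \<iota>' (f x) + 1" using fx unfolding \<iota>_def by simp
      also have "\<dots> = (N - 2 - 1 - \<iota>' x) + 1" using \<iota>'(2) xA' cA' by simp
      also have "\<dots> = N - 1 - (\<iota>' x + 1)" using lt[OF xA'] by simp
      also have "\<dots> = N - 1 - \<iota> x" using False unfolding \<iota>_def by simp
      finally show ?thesis .
    qed
    show ?thesis using bij eqv unfolding N_def by blast
  next
    case False
    show ?thesis
    proof (cases "A = {}")
      case True then show ?thesis by (simp add: bij_betw_def)
    next
      case ne: False
      then obtain a where a: "a \<in> A" by blast
      then have "A = {a}" using False less.prems(3) by blast
      then show ?thesis using False a by (intro exI[of _ "\<lambda>_. 0"]) (auto simp: bij_betw_def)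
    qed
  qed
qed

definition Dg :: "nat \<Rightarrow> (nat \<Rightarrow> nat \<Rightarrow> 'a::field) \<Rightarrow> (nat \<Rightarrow> 'a) \<Rightarrow> (nat \<Rightarrow> 'a) \<Rightarrow> (nat \<Rightarrow> 'a) \<Rightarrow> (nat \<Rightarrow> 'a) \<Rightarrow> nat \<Rightarrow> 'a" where
  "Dg t A lam s x y = (\<lambda>k. if k < 2*t then (\<Sum>j<t. A k j * (x j + lam k * y j)) + (if k < t then s k else 0) else 0)"

lemma addS_lineF: "addS t s (lineF t A r c z) = lineF t A r (\<lambda>k. c k + (if k < t then s k else 0)) z"
  unfolding addS_def lineF_def by (auto simp: fun_eq_iff algebra_simps)

lemma Dg_row: "Dg t A lam s x z = addS t s (lineF t A lam (\<lambda>k. \<Sum>j<t. A k j * x j) z)"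
  unfolding addS_def lineF_def Dg_def
  by (auto simp: fun_eq_iff algebra_simps sum.distrib sum_distrib_left)

lemma Dg_col: "Dg t A lam s z y = addS t s (lineF t A (\<lambda>_. 1) (\<lambda>k. \<Sum>j<t. A k j * (lam k * y j)) z)"
  unfolding addS_def lineF_def Dg_def
  by (auto simp: fun_eq_iff algebra_simps sum.distrib sum_distrib_left)

lemma Dg_diag: "Dg t A lam s z z = addS t s (lineF t A (\<lambda>k. 1 + lam k) (\<lambda>_. 0) z)"
  unfolding addS_def lineF_def Dg_def
  by (auto simp: fun_eq_iff algebra_simps sum.distrib sum_distrib_left)

lemma Dg_anti: "Dg t A lam s z (\<lambda>j. cv j - z j) =
   addS t s (lineF t A (\<lambda>k. 1 - lam k) (\<lambda>k. \<Sum>j<t. A k j * (lam k * cv j)) z)"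
  unfolding addS_def lineF_def Dg_def
  by (auto simp: fun_eq_iff algebra_simps sum.distrib sum_distrib_left sum_subtractf)



lemma lin_inj:
  fixes A :: "nat \<Rightarrow> nat \<Rightarrow> 'a::{finite,field}"
  assumes A: "A \<in> M_t t (2*t) t" and K: "K \<subseteq> {..<2*t}" "card K = t"
    and u: "u \<in> W {..<t}" "u' \<in> W {..<t}"
    and e: "\<forall>k\<in>K. (\<Sum>j<t. A k j * u j) = (\<Sum>j<t. A k j * u' j)"
  shows "u = u'"
proof -
  have b: "bij_betw (\<lambda>z. restr K (lineF t A (\<lambda>_. 1) (\<lambda>_. 0) z)) (W {..<t}) (W K)"
    using lin_bij[OF A K, of "\<lambda>_. 1" "\<lambda>_. 0"] by simp
  have "restr K (lineF t A (\<lambda>_. 1) (\<lambda>_. 0) u) = restr K (lineF t A (\<lambda>_. 1) (\<lambda>_. 0) u')"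
  proof
    fix k show "restr K (lineF t A (\<lambda>_. 1) (\<lambda>_. 0) u) k = restr K (lineF t A (\<lambda>_. 1) (\<lambda>_. 0) u') k"
      using e K unfolding restr_def lineF_def by auto
  qed
  then show ?thesis using b u unfolding bij_betw_def inj_on_def by blast
qed

locale cms_setup =
  fixes t :: nat and A :: "nat \<Rightarrow> nat \<Rightarrow> 'a::{finite,field}" and \<sigma> :: "'a \<Rightarrow> nat"
    and l1 l2 :: 'a and cv :: "nat \<Rightarrow> 'a" and \<iota> :: "(nat \<Rightarrow> 'a) \<Rightarrow> nat"
  assumes A: "A \<in> M_t t (2*t) t"
    and \<sigma>: "bij_betw \<sigma> UNIV {..<card (UNIV::'a set)}"
    and l1: "l1 \<noteq> 0" "l1 \<noteq> 1" "l1 \<noteq> -1" and l2: "l2 \<noteq> 0" "l2 \<noteq> 1" "l2 \<noteq> -1"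
    and l12: "l1 \<noteq> l2"
    and \<iota>: "bij_betw \<iota> (W {..<t}) {..<card (UNIV::'a set) ^ t}"
    and \<iota>neg: "\<forall>x\<in>W {..<t}. \<iota> (\<lambda>j. cv j - x j) = card (UNIV::'a set) ^ t - 1 - \<iota> x"
    and cv: "cv \<in> W {..<t}"
begin

abbreviation "VV \<equiv> (W {..<t} :: (nat \<Rightarrow> 'a) set)"

definition "lam = (\<lambda>k. if k < t then l1 else l2)"
definition "\<iota>' = inv_into VV \<iota>"
definition "Bm s i j = digval (2*t) \<sigma> (card (UNIV::'a set)) (Dg t A lam (\<iota>' s) (\<iota>' i) (\<iota>' j))"

lemma \<iota>'_bij: "bij_betw \<iota>' {..<(card (UNIV::'a set) ^ t)} VV"
  unfolding \<iota>'_def by (rule bij_betw_inv_into[OF \<iota>])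

lemma \<iota>'_\<iota>: "x \<in> VV \<Longrightarrow> \<iota>' (\<iota> x) = x"
  unfolding \<iota>'_def using \<iota> by (simp add: bij_betw_def inv_into_f_f)

lemma \<iota>'_in: "i < (card (UNIV::'a set) ^ t) \<Longrightarrow> \<iota>' i \<in> VV"
  using \<iota>'_bij unfolding bij_betw_def by auto

lemma negv_in: "x \<in> VV \<Longrightarrow> (\<lambda>j. cv j - x j) \<in> VV"
  using cv unfolding W_def by auto

lemma reidx: "(\<Sum>j<(card (UNIV::'a set) ^ t). f j) = (\<Sum>y\<in>VV. f (\<iota> y))"
  using sum.reindex_bij_betw[OF \<iota>, of f] by simp

lemma lam_nz: "lam k \<noteq> 0" "1 + lam k \<noteq> 0" "1 - lam k \<noteq> 0"
proof -
  show "lam k \<noteq> 0" using l1 l2 unfolding lam_def by auto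
  show "1 + lam k \<noteq> 0"
  proof
    assume "1 + lam k = 0"
    then have "lam k = -1" by (simp add: eq_neg_iff_add_eq_0 add.commute)
    then show False using l1 l2 unfolding lam_def by (auto split: if_splits)
  qed
  show "1 - lam k \<noteq> 0" using l1 l2 unfolding lam_def by auto
qed

definition "TT e = (\<Sum>z\<in>VV. real (digval (2*t) \<sigma> (card (UNIV::'a set)) (lineF t A (\<lambda>_. 1) (\<lambda>_. 0) z)) ^ e)"

lemma linesum:
  assumes "e \<le> t" "\<forall>k<2*t. r k \<noteq> 0"
  shows "(\<Sum>z\<in>VV. real (digval (2*t) \<sigma> (card (UNIV::'a set)) (addS t s (lineF t A r c z))) ^ e) = TT e"
  unfolding TT_def addS_lineF by (rule power_line_indep[OF A assms]) simp

lemma row_sum: "i < (card (UNIV::'a set) ^ t) \<Longrightarrow> s < (card (UNIV::'a set) ^ t) \<Longrightarrow> e \<le> t \<Longrightarrow> real (\<Sum>j<(card (UNIV::'a set) ^ t). Bm s i j ^ e) = TT e"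
proof -
  assume i: "i < (card (UNIV::'a set) ^ t)" and s: "s < (card (UNIV::'a set) ^ t)" and e: "e \<le> t"
  have "real (\<Sum>j<(card (UNIV::'a set) ^ t). Bm s i j ^ e) = (\<Sum>y\<in>VV. real (Bm s i (\<iota> y)) ^ e)"
    by (simp add: reidx)
  also have "\<dots> = (\<Sum>y\<in>VV. real (digval (2*t) \<sigma> (card (UNIV::'a set)) (addS t (\<iota>' s) (lineF t A lam (\<lambda>k. \<Sum>j<t. A k j * \<iota>' i j) y))) ^ e)"
    unfolding Bm_def by (intro sum.cong refl) (simp add: \<iota>'_\<iota> Dg_row)
  also have "\<dots> = TT e" using e lam_nz by (intro linesum) auto
  finally show ?thesis .
qed

lemma col_sum: "j < (card (UNIV::'a set) ^ t) \<Longrightarrow> s < (card (UNIV::'a set) ^ t) \<Longrightarrow> e \<le> t \<Longrightarrow> real (\<Sum>i<(card (UNIV::'a set) ^ t). Bm s i j ^ e) = TT e"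
proof -
  assume j: "j < (card (UNIV::'a set) ^ t)" and s: "s < (card (UNIV::'a set) ^ t)" and e: "e \<le> t"
  have "real (\<Sum>i<(card (UNIV::'a set) ^ t). Bm s i j ^ e) = (\<Sum>x\<in>VV. real (Bm s (\<iota> x) j) ^ e)"
    by (simp add: reidx)
  also have "\<dots> = (\<Sum>x\<in>VV. real (digval (2*t) \<sigma> (card (UNIV::'a set)) (addS t (\<iota>' s) (lineF t A (\<lambda>_. 1) (\<lambda>k. \<Sum>j'<t. A k j' * (lam k * \<iota>' j j')) x))) ^ e)"
    unfolding Bm_def by (intro sum.cong refl) (simp add: \<iota>'_\<iota> Dg_col)
  also have "\<dots> = TT e" using e by (intro linesum) auto
  finally show ?thesis .
qed

lemma diag_sum: "s < (card (UNIV::'a set) ^ t) \<Longrightarrow> e \<le> t \<Longrightarrow> real (\<Sum>i<(card (UNIV::'a set) ^ t). Bm s i i ^ e) = TT e"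
proof -
  assume s: "s < (card (UNIV::'a set) ^ t)" and e: "e \<le> t"
  have "real (\<Sum>i<(card (UNIV::'a set) ^ t). Bm s i i ^ e) = (\<Sum>x\<in>VV. real (Bm s (\<iota> x) (\<iota> x)) ^ e)"
    by (simp add: reidx)
  also have "\<dots> = (\<Sum>x\<in>VV. real (digval (2*t) \<sigma> (card (UNIV::'a set)) (addS t (\<iota>' s) (lineF t A (\<lambda>k. 1 + lam k) (\<lambda>_. 0) x))) ^ e)"
    unfolding Bm_def by (intro sum.cong refl) (simp add: \<iota>'_\<iota> Dg_diag)
  also have "\<dots> = TT e" using e lam_nz by (intro linesum) auto
  finally show ?thesis .
qed

lemma anti_idx: "x \<in> VV \<Longrightarrow> \<iota>' ((card (UNIV::'a set) ^ t) - 1 - \<iota> x) = (\<lambda>j. cv j - x j)"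
  using \<iota>neg \<iota>'_\<iota> negv_in by metis

lemma anti_idx': "x \<in> VV \<Longrightarrow> \<iota>' ((card (UNIV::'a set) ^ t) - Suc (\<iota> x)) = (\<lambda>j. cv j - x j)"
  using anti_idx by simp

lemma anti_sum: "s < (card (UNIV::'a set) ^ t) \<Longrightarrow> e \<le> t \<Longrightarrow> real (\<Sum>i<(card (UNIV::'a set) ^ t). Bm s i ((card (UNIV::'a set) ^ t) - 1 - i) ^ e) = TT e"
proof -
  assume s: "s < (card (UNIV::'a set) ^ t)" and e: "e \<le> t"
  have "real (\<Sum>i<(card (UNIV::'a set) ^ t). Bm s i ((card (UNIV::'a set) ^ t) - 1 - i) ^ e) = (\<Sum>x\<in>VV. real (Bm s (\<iota> x) ((card (UNIV::'a set) ^ t) - 1 - \<iota> x)) ^ e)"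
    by (simp add: reidx)
  also have "\<dots> = (\<Sum>x\<in>VV. real (digval (2*t) \<sigma> (card (UNIV::'a set)) (addS t (\<iota>' s) (lineF t A (\<lambda>k. 1 - lam k) (\<lambda>k. \<Sum>j<t. A k j * (lam k * cv j)) x))) ^ e)"
    unfolding Bm_def by (intro sum.cong refl) (simp add: \<iota>'_\<iota> anti_idx' Dg_anti)
  also have "\<dots> = TT e" using e lam_nz by (intro linesum) auto
  finally show ?thesis .
qed

end



context cms_setup
begin

lemma q_pos: "card (UNIV::'a set) > 0" by (simp add: finite_UNIV_card_ge_0)

lemma Dbij: assumes s: "s \<in> VV"
  shows "bij_betw (\<lambda>(x,y). Dg t A lam s x y) (VV \<times> VV) (W {..<2*t})"
proof -
  have inj: "inj_on (\<lambda>(x,y). Dg t A lam s x y) (VV \<times> VV)"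
  proof (rule inj_onI, clarify)
    fix x y x' y' :: "nat \<Rightarrow> 'a"
    assume x: "x \<in> VV" and y: "y \<in> VV" and x': "x' \<in> VV" and y': "y' \<in> VV"
      and e: "Dg t A lam s x y = Dg t A lam s x' y'"
    have u1: "(\<lambda>j. x j + l1 * y j) = (\<lambda>j. x' j + l1 * y' j)"
    proof (rule lin_inj[OF A, of "{..<t}"])
      show "{..<t} \<subseteq> {..<2*t}" by auto
      show "card {..<t} = t" by simp
      show "(\<lambda>j. x j + l1 * y j) \<in> VV" "(\<lambda>j. x' j + l1 * y' j) \<in> VV"
        using x y x' y' unfolding W_def by auto
      show "\<forall>k\<in>{..<t}. (\<Sum>j<t. A k j * (x j + l1 * y j)) = (\<Sum>j<t. A k j * (x' j + l1 * y' j))"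
      proof
        fix k assume "k \<in> {..<t}"
        then show "(\<Sum>j<t. A k j * (x j + l1 * y j)) = (\<Sum>j<t. A k j * (x' j + l1 * y' j))"
          using fun_cong[OF e, of k] unfolding Dg_def lam_def by simp
      qed
    qed
    have u2: "(\<lambda>j. x j + l2 * y j) = (\<lambda>j. x' j + l2 * y' j)"
    proof (rule lin_inj[OF A, of "{t..<2*t}"])
      show "{t..<2*t} \<subseteq> {..<2*t}" by auto
      show "card {t..<2*t} = t" by simp
      show "(\<lambda>j. x j + l2 * y j) \<in> VV" "(\<lambda>j. x' j + l2 * y' j) \<in> VV"
        using x y x' y' unfolding W_def by auto
      show "\<forall>k\<in>{t..<2*t}. (\<Sum>j<t. A k j * (x j + l2 * y j)) = (\<Sum>j<t. A k j * (x' j + l2 * y' j))"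
      proof
        fix k assume "k \<in> {t..<2*t}"
        then show "(\<Sum>j<t. A k j * (x j + l2 * y j)) = (\<Sum>j<t. A k j * (x' j + l2 * y' j))"
          using fun_cong[OF e, of k] unfolding Dg_def lam_def by simp
      qed
    qed
    have "x j = x' j \<and> y j = y' j" for j
    proof -
      have a: "x j + l1 * y j = x' j + l1 * y' j" using fun_cong[OF u1, of j] by simp
      have b: "x j + l2 * y j = x' j + l2 * y' j" using fun_cong[OF u2, of j] by simp
      have "x j + l1 * y j - (x j + l2 * y j) = x' j + l1 * y' j - (x' j + l2 * y' j)"
        using a b by simp
      then have "(l1 - l2) * y j = (l1 - l2) * y' j" by (simp add: algebra_simps)
      then have yy: "y j = y' j" using l12 by simp
      then show ?thesis using a by simp
    qed
    then show "x = x' \<and> y = y'" by (auto simp: fun_eq_iff)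
  qed
  have sub: "(\<lambda>(x,y). Dg t A lam s x y) ` (VV \<times> VV) \<subseteq> W {..<2*t}"
    unfolding W_def Dg_def by auto
  have "card (VV \<times> VV) = card (W {..<2*t} :: (nat \<Rightarrow> 'a) set)"
    by (simp add: card_cartesian_product card_W power_add[symmetric] mult_2)
  then show ?thesis using inj_card_bij[OF finite_W inj sub] by simp
qed

lemma dig_bij: "bij_betw (digval (2*t) \<sigma> (card (UNIV::'a set))) (W {..<2*t}) {..<card (UNIV::'a set) ^ (2*t)}"
  by (rule digval_bij[OF \<sigma>])

lemma nn_sq: "(card (UNIV::'a set) ^ t)\<^sup>2 = card (UNIV::'a set) ^ (2*t)"
  by (simp add: power_mult[symmetric] mult.commute)

lemma MSbij: "bij_betw (\<lambda>(i,j). Bm s i j) ({..<card (UNIV::'a set) ^ t} \<times> {..<card (UNIV::'a set) ^ t})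
     {..<(card (UNIV::'a set) ^ t)\<^sup>2}" if s: "s < card (UNIV::'a set) ^ t"
proof -
  have b1: "bij_betw (map_prod \<iota>' \<iota>') ({..<card (UNIV::'a set) ^ t} \<times> {..<card (UNIV::'a set) ^ t}) (VV \<times> VV)"
    by (rule bij_betw_map_prod[OF \<iota>'_bij \<iota>'_bij])
  have b2: "bij_betw (\<lambda>(x,y). Dg t A lam (\<iota>' s) x y) (VV \<times> VV) (W {..<2*t})"
    by (rule Dbij[OF \<iota>'_in[OF s]])
  have "bij_betw (digval (2*t) \<sigma> (card (UNIV::'a set)) \<circ> (\<lambda>(x,y). Dg t A lam (\<iota>' s) x y) \<circ> map_prod \<iota>' \<iota>')
     ({..<card (UNIV::'a set) ^ t} \<times> {..<card (UNIV::'a set) ^ t}) {..<card (UNIV::'a set) ^ (2*t)}"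
    by (rule bij_betw_trans[OF b1 bij_betw_trans[OF b2 dig_bij]])
  moreover have "digval (2*t) \<sigma> (card (UNIV::'a set)) \<circ> (\<lambda>(x,y). Dg t A lam (\<iota>' s) x y) \<circ> map_prod \<iota>' \<iota>'
      = (\<lambda>(i,j). Bm s i j)"
    unfolding Bm_def by (auto simp: fun_eq_iff)
  ultimately show ?thesis by (simp add: nn_sq)
qed

lemma B_inj: "inj_on Bm {..<card (UNIV::'a set) ^ t}"
proof (rule inj_onI)
  fix s s' assume s: "s \<in> {..<card (UNIV::'a set) ^ t}" and s': "s' \<in> {..<card (UNIV::'a set) ^ t}"
    and e: "Bm s = Bm s'"
  define x0 where "x0 = \<iota>' 0"
  have "Bm s 0 0 = Bm s' 0 0" using e by simp
  then have "digval (2*t) \<sigma> (card (UNIV::'a set)) (Dg t A lam (\<iota>' s) x0 x0)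
           = digval (2*t) \<sigma> (card (UNIV::'a set)) (Dg t A lam (\<iota>' s') x0 x0)"
    unfolding Bm_def x0_def by simp
  moreover have "Dg t A lam (\<iota>' s) x0 x0 \<in> W {..<2*t}" "Dg t A lam (\<iota>' s') x0 x0 \<in> W {..<2*t}"
    unfolding W_def Dg_def by auto
  ultimately have d: "Dg t A lam (\<iota>' s) x0 x0 = Dg t A lam (\<iota>' s') x0 x0"
    using dig_bij unfolding bij_betw_def inj_on_def by blast
  have "\<iota>' s k = \<iota>' s' k" for k
  proof (cases "k < t")
    case True then show ?thesis using fun_cong[OF d, of k] unfolding Dg_def by simp
  next
    case False then show ?thesis using \<iota>'_in s s' unfolding W_def by auto
  qed
  then have "\<iota>' s = \<iota>' s'" by auto
  then show "s = s'" using \<iota>'_bij s s' unfolding bij_betw_def inj_on_def by blast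
qed

lemma cms_total:
  assumes r: "\<forall>k<2*t. r k \<noteq> 0"
  shows "(\<Sum>s\<in>VV. \<Sum>z\<in>VV. real (digval (2*t) \<sigma> (card (UNIV::'a set)) (addS t s (lineF t A r c z))) ^ p)
       = (\<Sum>k<card (UNIV::'a set) ^ (2*t). real k ^ p)"
proof -
  let ?G = "\<lambda>d. real (digval (2*t) \<sigma> (card (UNIV::'a set)) d) ^ p"
  have "(\<Sum>s\<in>VV. \<Sum>z\<in>VV. ?G (addS t s (lineF t A r c z)))
      = (\<Sum>x\<in>VV \<times> VV. ?G ((\<lambda>(s,z). addS t s (lineF t A r c z)) x))"
    by (simp add: sum.cartesian_product split_def)
  also have "\<dots> = (\<Sum>d\<in>W {..<2*t}. ?G d)"
    by (rule sum.reindex_bij_betw[OF cms_bij[OF A r]])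
  also have "\<dots> = (\<Sum>k<card (UNIV::'a set) ^ (2*t). real k ^ p)"
    by (rule sum.reindex_bij_betw[OF dig_bij, of "\<lambda>k. real k ^ p"])
  finally show ?thesis .
qed

lemma Spow: "real (card (UNIV::'a set) ^ t) * S_pow (t+1) (card (UNIV::'a set) ^ t)
    = (\<Sum>k<card (UNIV::'a set) ^ (2*t). real k ^ (t+1))"
  unfolding S_pow_def nn_sq using q_pos by simp

lemma cms_row: "i < card (UNIV::'a set) ^ t \<Longrightarrow>
  (\<Sum>s<card (UNIV::'a set) ^ t. \<Sum>j<card (UNIV::'a set) ^ t. real (Bm s i j) ^ (t+1))
    = real (card (UNIV::'a set) ^ t) * S_pow (t+1) (card (UNIV::'a set) ^ t)"
proof -
  have "(\<Sum>s<card (UNIV::'a set) ^ t. \<Sum>j<card (UNIV::'a set) ^ t. real (Bm s i j) ^ (t+1))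
     = (\<Sum>s\<in>VV. \<Sum>y\<in>VV. real (Bm (\<iota> s) i (\<iota> y)) ^ (t+1))"
    by (simp add: reidx)
  also have "\<dots> = (\<Sum>s\<in>VV. \<Sum>y\<in>VV. real (digval (2*t) \<sigma> (card (UNIV::'a set)) (addS t s (lineF t A lam (\<lambda>k. \<Sum>j<t. A k j * \<iota>' i j) y))) ^ (t+1))"
    unfolding Bm_def by (intro sum.cong refl) (simp add: \<iota>'_\<iota> Dg_row)
  also have "\<dots> = real (card (UNIV::'a set) ^ t) * S_pow (t+1) (card (UNIV::'a set) ^ t)"
    unfolding Spow using lam_nz by (intro cms_total) auto
  finally show ?thesis .
qed

lemma cms_col: "j < card (UNIV::'a set) ^ t \<Longrightarrow>
  (\<Sum>s<card (UNIV::'a set) ^ t. \<Sum>i<card (UNIV::'a set) ^ t. real (Bm s i j) ^ (t+1))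
    = real (card (UNIV::'a set) ^ t) * S_pow (t+1) (card (UNIV::'a set) ^ t)"
proof -
  have "(\<Sum>s<card (UNIV::'a set) ^ t. \<Sum>i<card (UNIV::'a set) ^ t. real (Bm s i j) ^ (t+1))
     = (\<Sum>s\<in>VV. \<Sum>x\<in>VV. real (Bm (\<iota> s) (\<iota> x) j) ^ (t+1))"
    by (simp add: reidx)
  also have "\<dots> = (\<Sum>s\<in>VV. \<Sum>x\<in>VV. real (digval (2*t) \<sigma> (card (UNIV::'a set)) (addS t s (lineF t A (\<lambda>_. 1) (\<lambda>k. \<Sum>j'<t. A k j' * (lam k * \<iota>' j j')) x))) ^ (t+1))"
    unfolding Bm_def by (intro sum.cong refl) (simp add: \<iota>'_\<iota> Dg_col)
  also have "\<dots> = real (card (UNIV::'a set) ^ t) * S_pow (t+1) (card (UNIV::'a set) ^ t)"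
    unfolding Spow by (intro cms_total) auto
  finally show ?thesis .
qed

lemma cms_diag:
  "(\<Sum>s<card (UNIV::'a set) ^ t. \<Sum>i<card (UNIV::'a set) ^ t. real (Bm s i i) ^ (t+1))
    = real (card (UNIV::'a set) ^ t) * S_pow (t+1) (card (UNIV::'a set) ^ t)"
proof -
  have "(\<Sum>s<card (UNIV::'a set) ^ t. \<Sum>i<card (UNIV::'a set) ^ t. real (Bm s i i) ^ (t+1))
     = (\<Sum>s\<in>VV. \<Sum>x\<in>VV. real (Bm (\<iota> s) (\<iota> x) (\<iota> x)) ^ (t+1))"
    by (simp add: reidx)
  also have "\<dots> = (\<Sum>s\<in>VV. \<Sum>x\<in>VV. real (digval (2*t) \<sigma> (card (UNIV::'a set)) (addS t s (lineF t A (\<lambda>k. 1 + lam k) (\<lambda>_. 0) x))) ^ (t+1))"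
    unfolding Bm_def by (intro sum.cong refl) (simp add: \<iota>'_\<iota> Dg_diag)
  also have "\<dots> = real (card (UNIV::'a set) ^ t) * S_pow (t+1) (card (UNIV::'a set) ^ t)"
    unfolding Spow using lam_nz by (intro cms_total) auto
  finally show ?thesis .
qed

lemma cms_anti:
  "(\<Sum>s<card (UNIV::'a set) ^ t. \<Sum>i<card (UNIV::'a set) ^ t. real (Bm s i (card (UNIV::'a set) ^ t - 1 - i)) ^ (t+1))
    = real (card (UNIV::'a set) ^ t) * S_pow (t+1) (card (UNIV::'a set) ^ t)"
proof -
  have "(\<Sum>s<card (UNIV::'a set) ^ t. \<Sum>i<card (UNIV::'a set) ^ t. real (Bm s i (card (UNIV::'a set) ^ t - 1 - i)) ^ (t+1))
     = (\<Sum>s\<in>VV. \<Sum>x\<in>VV. real (Bm (\<iota> s) (\<iota> x) (card (UNIV::'a set) ^ t - 1 - \<iota> x)) ^ (t+1))"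
    by (simp add: reidx)
  also have "\<dots> = (\<Sum>s\<in>VV. \<Sum>x\<in>VV. real (digval (2*t) \<sigma> (card (UNIV::'a set)) (addS t s (lineF t A (\<lambda>k. 1 - lam k) (\<lambda>k. \<Sum>j<t. A k j * (lam k * cv j)) x))) ^ (t+1))"
    unfolding Bm_def by (intro sum.cong refl) (simp add: \<iota>'_\<iota> anti_idx' Dg_anti)
  also have "\<dots> = real (card (UNIV::'a set) ^ t) * S_pow (t+1) (card (UNIV::'a set) ^ t)"
    unfolding Spow using lam_nz by (intro cms_total) auto
  finally show ?thesis .
qed

lemma MS: "s < card (UNIV::'a set) ^ t \<Longrightarrow> is_MS (card (UNIV::'a set) ^ t) t (Bm s)"
proof -
  assume s: "s < card (UNIV::'a set) ^ t"
  have "\<exists>c::nat. (\<forall>i<card (UNIV::'a set) ^ t. (\<Sum>j<card (UNIV::'a set) ^ t. Bm s i j ^ e) = c) \<and>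
        (\<forall>j<card (UNIV::'a set) ^ t. (\<Sum>i<card (UNIV::'a set) ^ t. Bm s i j ^ e) = c) \<and>
        (\<Sum>i<card (UNIV::'a set) ^ t. Bm s i i ^ e) = c \<and>
        (\<Sum>i<card (UNIV::'a set) ^ t. Bm s i (card (UNIV::'a set) ^ t - 1 - i) ^ e) = c"
    if e: "e \<in> {1..t}" for e
  proof (intro exI conjI allI impI)
    let ?c = "\<Sum>j<card (UNIV::'a set) ^ t. Bm s 0 j ^ e"
    have et: "e \<le> t" using e by simp
    have c: "real ?c = TT e" using row_sum[OF _ s et] q_pos by simp
    show "(\<Sum>j<card (UNIV::'a set) ^ t. Bm s i j ^ e) = ?c" if "i < card (UNIV::'a set) ^ t" for i
      using row_sum[OF that s et] c by (simp only: of_nat_eq_iff[symmetric])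
    show "(\<Sum>i<card (UNIV::'a set) ^ t. Bm s i j ^ e) = ?c" if "j < card (UNIV::'a set) ^ t" for j
      using col_sum[OF that s et] c by (simp only: of_nat_eq_iff[symmetric])
    show "(\<Sum>i<card (UNIV::'a set) ^ t. Bm s i i ^ e) = ?c"
      using diag_sum[OF s et] c by (simp only: of_nat_eq_iff[symmetric])
    show "(\<Sum>i<card (UNIV::'a set) ^ t. Bm s i (card (UNIV::'a set) ^ t - 1 - i) ^ e) = ?c"
      using anti_sum[OF s et] c by (simp only: of_nat_eq_iff[symmetric])
  qed
  then show ?thesis unfolding is_MS_def using MSbij[OF s] by blast
qed

lemma main: "\<exists>B. is_CMS (card (UNIV::'a set) ^ t) (card (UNIV::'a set) ^ t) t B"
  unfolding is_CMS_def using B_inj MS cms_row cms_col cms_diag cms_anti by blast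

end



theorem lemma3p4:
  fixes t :: nat
  assumes "t \<ge> 2"
    and "card (UNIV :: 'a set) \<ge> 4"
    and "(M_t t (2*t) t :: (nat \<Rightarrow> nat \<Rightarrow> 'a::{finite,field}) set) \<noteq> {}"
  shows "\<exists>B. is_CMS (card (UNIV :: 'a set) ^ t) (card (UNIV :: 'a set) ^ t) t B"
proof -
  obtain A :: "nat \<Rightarrow> nat \<Rightarrow> 'a" where A: "A \<in> M_t t (2*t) t" using assms(3) by blast
  obtain \<sigma> :: "'a \<Rightarrow> nat" where \<sigma>: "bij_betw \<sigma> UNIV {..<card (UNIV::'a set)}"
    using ex_bij_betw_finite_nat[of "UNIV::'a set"] by (auto simp: atLeast0LessThan)
  have avoid: "\<exists>x::'a. x \<notin> {a, b, c}" for a b c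
  proof (rule ccontr)
    assume "\<not> ?thesis"
    then have "UNIV \<subseteq> {a, b, c}" by blast
    then have "card (UNIV::'a set) \<le> card {a, b, c}" by (intro card_mono) auto
    also have "\<dots> \<le> 3" using card_length[of "[a, b, c]"] by simp
    finally show False using assms(2) by simp
  qed
  obtain l1 :: 'a where l1: "l1 \<notin> {0, 1, -1}" using avoid by blast
  obtain l2 :: 'a where l2: "l2 \<notin> {0, 1, -1}" and l12: "l1 \<noteq> l2"
  proof (cases "(2::'a) = 0")
    case True
    then have "(1::'a) + 1 = 0" by simp
    then have "(1::'a) = -1" by (simp only: eq_neg_iff_add_eq_0)
    then have m1: "-1 = (1::'a)" by simp
    obtain b :: 'a where "b \<notin> {0, 1, l1}" using avoid by blast
    then show ?thesis by (intro that[of b]) (use m1 in auto)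
  next
    case False
    have "-l1 \<noteq> l1"
    proof
      assume "-l1 = l1"
      then have "l1 + l1 = 0" using eq_neg_iff_add_eq_0[of l1 l1] by simp
      moreover have "2 * l1 = l1 + l1" by (rule mult_2)
      ultimately have "2 * l1 = 0" by (rule trans[rotated])
      then show False using False l1 by simp
    qed
    moreover have "-l1 \<notin> {0, 1, -1}"
    proof -
      have "-l1 \<noteq> 0" using l1 by simp
      moreover have "-l1 \<noteq> -1" using l1 by simp
      moreover have "-l1 \<noteq> 1"
      proof
        assume "-l1 = 1"
        then have "l1 = -1" by (metis minus_minus)
        then show False using l1 by simp
      qed
      ultimately show ?thesis by simp
    qed
    ultimately show ?thesis by (intro that[of "-l1"]) auto
  qed
  define cv :: "nat \<Rightarrow> 'a" where "cv = (if (2::'a) = 0 then (\<lambda>j. if j < t then 1 else 0) else (\<lambda>_. 0))"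
  have cv: "cv \<in> W {..<t}" unfolding cv_def W_def by auto
  define f where "f = (\<lambda>x::nat \<Rightarrow> 'a. (\<lambda>j. cv j - x j))"
  have fV: "\<forall>x\<in>W {..<t}. f x \<in> W {..<t} \<and> f (f x) = x"
    using cv unfolding f_def W_def by auto
  have fix0: "x j = 0" if x: "f x = x" for x :: "nat \<Rightarrow> 'a" and j
  proof -
    have cj: "cv j = 2 * x j" if "True" for j
    proof -
      have "cv j - x j = x j" using fun_cong[OF x, of j] unfolding f_def by simp
      then have "cv j = x j + x j" by (simp only: diff_eq_eq)
      then show ?thesis by (simp only: mult_2)
    qed
    show ?thesis
    proof (cases "(2::'a) = 0")
      case True
      then have "cv 0 = 0" using cj[of 0] by simp
      moreover have "cv 0 = 1" using True assms(1) unfolding cv_def by simp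
      ultimately show ?thesis by simp
    next
      case False
      then have "cv j = 0" unfolding cv_def by simp
      then show ?thesis using cj[of j] False by simp
    qed
  qed
  have fixu: "\<forall>x\<in>W {..<t}. \<forall>y\<in>W {..<t}. f x = x \<longrightarrow> f y = y \<longrightarrow> x = y"
  proof (intro ballI impI)
    fix x y :: "nat \<Rightarrow> 'a" assume "f x = x" "f y = y"
    then show "x = y" using fix0[of x] fix0[of y] by (intro ext) simp
  qed
  obtain \<iota> where \<iota>: "bij_betw \<iota> (W {..<t}) {..<card (W {..<t} :: (nat \<Rightarrow> 'a) set)}"
    "\<forall>x\<in>W {..<t}. \<iota> (f x) = card (W {..<t} :: (nat \<Rightarrow> 'a) set) - 1 - \<iota> x"
    using invol_bij[OF finite_W fV fixu] by auto
  have cV: "card (W {..<t} :: (nat \<Rightarrow> 'a) set) = card (UNIV::'a set) ^ t" by (simp add: card_W)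
  have "cms_setup t A \<sigma> l1 l2 cv \<iota>"
    unfolding cms_setup_def
  proof (intro conjI)
    show "bij_betw \<iota> (W {..<t}) {..<card (UNIV::'a set) ^ t}" using \<iota>(1) cV by simp
    show "\<forall>x\<in>W {..<t}. \<iota> (\<lambda>j. cv j - x j) = card (UNIV::'a set) ^ t - 1 - \<iota> x"
      using \<iota>(2) cV unfolding f_def by simp
  qed (use A \<sigma> l1 l2 l12 cv in simp_all)
  then show ?thesis by (rule cms_setup.main)
qed


end
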